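(* Let $G$ be a completable graph and let $A(G),B(G)$ be $G$-partial matrices with $0<B(G)<A(G)$. Then $$\mathfrak{p}^+[A(G)-B(G)]=\big(\mathfrak{p}^+[A(G)]-\mathfrak{p}^+[B(G)]\big)\cap\mathbb{P},$$ where $\mathfrak{p}^+[A(G)]-\mathfrak{p}^+[B(G)]=\{M-N:M\in\mathfrak{p}^+[A(G)],N\in\mathfrak{p}^+[B(G)]\}$.
   Context: A graph $G=(V,E)$ is a finite undirected graph on $V=\{1,\dots,n\}$ containing all loops. A $G$-partial matrix has entries specified exactly for $\{i,j\}\in E$; a completion is an $n\times n$ matrix agreeing with it on $E$. Sums and differences of $G$-partial matrices are taken entrywise on $E$. A $G$-partial matrix $[a_{ij}]_G$ is partial positive definite if $a_{ji}=\overline{a_{ij}}$ on $E$ and every principal submatrix indexed by a clique of $G$ is positive definite. For $G$-partial Hermitian matrices, $C(G)>D(G)$ means $C(G)-D(G)$ is partial positive definite (so $0<B(G)$ means $B(G)$ is partial positive definite). $G$ is completable if every $G$-partial positive semidefinite matrix has a positive semidefinite completion (equivalently $G$ chordal). $\mathfrak{p}^+[\cdot]$ denotes the set of positive definite completions, and $\mathbb{P}$ the set of $n\times n$ positive definite matrices. *)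

theory Defs
  imports "HOL-Analysis.Analysis"
begin

text \<open>Vertices are the elements of a finite type 'n (playing the role of {1..n});
  matrices are complex n x n matrices of type complex^'n^'n.
  A G-partial matrix is represented by any full matrix; only its entries on E matter
  (all notions below depend only on the entries on E).\<close>

definition is_graph :: "('n::finite \<times> 'n) set \<Rightarrow> bool" where
  "is_graph E \<longleftrightarrow> sym E \<and> (\<forall>i. (i, i) \<in> E)"

definition is_clique :: "('n::finite \<times> 'n) set \<Rightarrow> 'n set \<Rightarrow> bool" where
  "is_clique E K \<longleftrightarrow> (\<forall>i\<in>K. \<forall>j\<in>K. (i, j) \<in> E)"

definition qform :: "complex^'n^'n \<Rightarrow> complex^'n \<Rightarrow> complex" where
  "qform A x = (\<Sum>i\<in>UNIV. \<Sum>j\<in>UNIV. cnj (x$i) * A$i$j * x$j)"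

definition pd_on :: "'n::finite set \<Rightarrow> complex^'n^'n \<Rightarrow> bool" where
  "pd_on K A \<longleftrightarrow> (\<forall>i\<in>K. \<forall>j\<in>K. A$j$i = cnj (A$i$j)) \<and>
     (\<forall>x. x \<noteq> 0 \<and> (\<forall>i. i \<notin> K \<longrightarrow> x$i = 0) \<longrightarrow>
        Im (qform A x) = 0 \<and> Re (qform A x) > 0)"

definition psd_on :: "'n::finite set \<Rightarrow> complex^'n^'n \<Rightarrow> bool" where
  "psd_on K A \<longleftrightarrow> (\<forall>i\<in>K. \<forall>j\<in>K. A$j$i = cnj (A$i$j)) \<and>
     (\<forall>x. (\<forall>i. i \<notin> K \<longrightarrow> x$i = 0) \<longrightarrow>
        Im (qform A x) = 0 \<and> Re (qform A x) \<ge> 0)"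

definition pos_def :: "complex^'n^'n \<Rightarrow> bool" where
  "pos_def M \<longleftrightarrow> pd_on (UNIV::'n::finite set) M"

definition pos_semidef :: "complex^'n^'n \<Rightarrow> bool" where
  "pos_semidef M \<longleftrightarrow> psd_on (UNIV::'n::finite set) M"

definition partial_pd :: "('n::finite \<times> 'n) set \<Rightarrow> complex^'n^'n \<Rightarrow> bool" where
  "partial_pd E A \<longleftrightarrow> (\<forall>(i, j)\<in>E. A$j$i = cnj (A$i$j)) \<and>
     (\<forall>K. is_clique E K \<longrightarrow> pd_on K A)"

definition partial_psd :: "('n::finite \<times> 'n) set \<Rightarrow> complex^'n^'n \<Rightarrow> bool" where
  "partial_psd E A \<longleftrightarrow> (\<forall>(i, j)\<in>E. A$j$i = cnj (A$i$j)) \<and>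
     (\<forall>K. is_clique E K \<longrightarrow> psd_on K A)"

definition is_completion :: "('n::finite \<times> 'n) set \<Rightarrow> complex^'n^'n \<Rightarrow> complex^'n^'n \<Rightarrow> bool" where
  "is_completion E A M \<longleftrightarrow> (\<forall>(i, j)\<in>E. M$i$j = A$i$j)"

definition completable :: "('n::finite \<times> 'n) set \<Rightarrow> bool" where
  "completable E \<longleftrightarrow> (\<forall>A. partial_psd E A \<longrightarrow> (\<exists>M. is_completion E A M \<and> pos_semidef M))"

definition pd_completions :: "('n::finite \<times> 'n) set \<Rightarrow> complex^'n^'n \<Rightarrow> (complex^'n^'n) set" where
  "pd_completions E A = {M. is_completion E A M \<and> pos_def M}"

end

theory Submission
  imports Defs
begin

lemma qform_add: "qform (A + B) x = qform A x + qform B x"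
  by (simp add: qform_def algebra_simps sum.distrib)

lemma qform_diff: "qform (A - B) x = qform A x - qform B x"
  by (simp add: qform_def algebra_simps sum_subtractf)

lemma qform_zero: "qform B 0 = 0"
  by (simp add: qform_def)

lemma norm_sq_vec: "(norm (x::complex^'n))^2 = (\<Sum>i\<in>UNIV. (norm (x$i))^2)"
  by (simp add: norm_vec_def L2_set_def sum_nonneg)

lemma qform_mat: "qform (mat c) (x::complex^'n) = c * of_real ((norm x)^2)"
proof -
  have "qform (mat c) x = (\<Sum>i\<in>UNIV. c * (cnj (x$i) * x$i))"
    unfolding qform_def mat_def
    by (simp add: if_distrib if_distribR sum.delta algebra_simps cong: if_cong)
  also have "\<dots> = c * (\<Sum>i\<in>UNIV. of_real ((norm (x$i))^2))"
    by (simp add: sum_distrib_left complex_norm_square mult.commute)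
       (metis (no_types, lifting) complex_norm_square mult.commute of_real_power)
  also have "\<dots> = c * of_real ((norm x)^2)"
    by (simp add: norm_sq_vec)
  finally show ?thesis .
qed

lemma qform_scale: "qform B (r *\<^sub>R x) = of_real (r^2) * qform B x"
  unfolding qform_def vector_scaleR_component
  by (simp add: sum_distrib_left algebra_simps power2_eq_square scaleR_conv_of_real)

lemma cont_qform: "continuous_on S (\<lambda>x. Re (qform B x))"
  unfolding qform_def by (intro continuous_intros)

lemma pd_on_uniform:
  fixes B :: "complex^'n::finite^'n"
  assumes "pd_on K B"
  shows "\<exists>e>0. \<forall>x. (\<forall>i. i \<notin> K \<longrightarrow> x$i = 0) \<longrightarrow> Re (qform B x) \<ge> e * (norm x)^2"
proof -
  define S where "S = {x::complex^'n. (\<forall>i. i \<notin> K \<longrightarrow> x$i = 0) \<and> norm x = 1}"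
  have sc: "x /\<^sub>R norm x \<in> S" if "\<forall>i. i \<notin> K \<longrightarrow> x$i = 0" "x \<noteq> 0" for x
    using that by (auto simp: S_def)
  have sc2: "Re (qform B x) = (norm x)^2 * Re (qform B (x /\<^sub>R norm x))" if "x \<noteq> 0" for x
  proof -
    have "x = norm x *\<^sub>R (x /\<^sub>R norm x)" using that by simp
    then have "qform B x = of_real ((norm x)^2) * qform B (x /\<^sub>R norm x)"
      by (metis qform_scale)
    then show ?thesis by simp
  qed
  show ?thesis
  proof (cases "S = {}")
    case True
    then show ?thesis using sc
      by (intro exI[of _ 1]) (metis empty_iff less_numeral_extra(1) mult_zero_right norm_zero
        order.refl power_zero_numeral qform_zero zero_complex.simps(1))
  next
    case False
    have "closed S" unfolding S_def
      by (intro closed_Collect_conj closed_Collect_all closed_Collect_imp closed_Collect_eq continuous_intros) auto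
    moreover have "bounded S" unfolding S_def bounded_iff by auto
    ultimately have "compact S" by (simp add: compact_eq_bounded_closed)
    then obtain x0 where x0: "x0 \<in> S" "\<And>y. y \<in> S \<Longrightarrow> Re (qform B x0) \<le> Re (qform B y)"
      using continuous_attains_inf[OF _ False cont_qform] by blast
    have m: "Re (qform B x0) > 0"
    proof -
      have "x0 \<noteq> 0" using x0(1) unfolding S_def by auto
      then show ?thesis using x0(1) assms unfolding S_def pd_on_def by blast
    qed
    show ?thesis
    proof (intro exI[of _ "Re (qform B x0)"] conjI m allI impI)
      fix x :: "complex^'n" assume h: "\<forall>i. i \<notin> K \<longrightarrow> x$i = 0"
      show "Re (qform B x0) * (norm x)^2 \<le> Re (qform B x)"
      proof (cases "x = 0")
        case True then show ?thesis by (simp add: qform_zero)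
      next
        case False
        then show ?thesis using sc2[OF False] x0(2)[OF sc[OF h False]]
          by (simp add: mult.commute mult_left_mono)
      qed
    qed
  qed
qed

lemma pos_def_add:
  fixes M N :: "complex^'n::finite^'n"
  assumes "pos_def M" "pos_def N" shows "pos_def (M + N)"
  unfolding pos_def_def pd_on_def
proof (intro conjI ballI allI impI)
  fix i j :: 'n
  have "M$j$i = cnj (M$i$j)" "N$j$i = cnj (N$i$j)"
    using assms unfolding pos_def_def pd_on_def by blast+
  then show "(M + N)$j$i = cnj ((M + N)$i$j)" by simp
next
  fix x :: "complex^'n" assume h: "x \<noteq> 0 \<and> (\<forall>i. i \<notin> UNIV \<longrightarrow> x $ i = 0)"
  have "Im (qform M x) = 0 \<and> Re (qform M x) > 0" "Im (qform N x) = 0 \<and> Re (qform N x) > 0"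
    using assms h unfolding pos_def_def pd_on_def by blast+
  then show "Im (qform (M + N) x) = 0" and "Re (qform (M + N) x) > 0"
    unfolding qform_add by simp_all
qed

lemma pd_completion_exists:
  fixes B :: "complex^'n::finite^'n"
  assumes "completable E" "partial_pd E B"
  shows "\<exists>N. is_completion E B N \<and> pos_def N"
proof -
  have "\<forall>K. \<exists>e>0. is_clique E K \<longrightarrow> (\<forall>x. (\<forall>i. i \<notin> K \<longrightarrow> x$i = 0) \<longrightarrow> Re (qform B x) \<ge> e * (norm x)^2)"
    using pd_on_uniform assms(2) unfolding partial_pd_def by (metis zero_less_one)
  then obtain e where e: "\<And>K. e K > 0"
    "\<And>K x. is_clique E K \<Longrightarrow> (\<forall>i. i \<notin> K \<longrightarrow> x$i = 0) \<Longrightarrow> Re (qform B x) \<ge> e K * (norm x)^2"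
    by metis
  define cl where "cl = {K. is_clique E K}"
  define eps where "eps = Min (e ` cl)"
  have fin: "finite (e ` cl)" by simp
  have ne: "e ` cl \<noteq> {}" unfolding cl_def is_clique_def by auto
  have epos: "eps > 0" unfolding eps_def using fin ne e(1) by (subst Min_gr_iff) auto
  have ele: "eps \<le> e K" if "is_clique E K" for K
    unfolding eps_def using fin that cl_def by (intro Min_le) auto
  define C where "C = B - mat (of_real eps)"
  have herm: "C$j$i = cnj (C$i$j)" if "(i,j) \<in> E" for i j
    using that assms(2) unfolding partial_pd_def C_def mat_def by auto
  have "partial_psd E C"
    unfolding partial_psd_def
  proof (intro conjI allI impI)
    show "\<forall>(i, j)\<in>E. C $ j $ i = cnj (C $ i $ j)" using herm by auto
    fix K assume K: "is_clique E K"
    show "psd_on K C" unfolding psd_on_def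
    proof (intro conjI ballI allI impI)
      show "C $ j $ i = cnj (C $ i $ j)" if "i \<in> K" "j \<in> K" for i j
        using K that unfolding is_clique_def by (intro herm) blast
      fix x :: "complex^'n" assume h: "\<forall>i. i \<notin> K \<longrightarrow> x $ i = 0"
      have q: "qform C x = qform B x - of_real eps * of_real ((norm x)^2)"
        unfolding C_def qform_diff qform_mat ..
      show "Im (qform C x) = 0"
      proof (cases "x = 0")
        case True then show ?thesis by (simp add: qform_zero)
      next
        case False
        then have "Im (qform B x) = 0" using assms(2) K h unfolding partial_pd_def pd_on_def by blast
        then show ?thesis using q by simp
      qed
      have "eps * (norm x)^2 \<le> e K * (norm x)^2" using ele[OF K] by (simp add: mult_right_mono)
      then show "0 \<le> Re (qform C x)" using q e(2)[OF K h] by simp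
    qed
  qed
  then obtain M where M: "is_completion E C M" "pos_semidef M"
    using assms(1) unfolding completable_def by blast
  define N where "N = M + mat (of_real eps)"
  have "is_completion E B N"
    using M(1) unfolding is_completion_def N_def C_def by auto
  moreover have "pos_def N"
    unfolding pos_def_def pd_on_def
  proof (intro conjI ballI allI impI)
    show "N $ j $ i = cnj (N $ i $ j)" for i j
    proof -
      have "M$j$i = cnj (M$i$j)" using M(2) unfolding pos_semidef_def psd_on_def by blast
      then show ?thesis unfolding N_def mat_def by simp
    qed
    fix x :: "complex^'n" assume h: "x \<noteq> 0 \<and> (\<forall>i. i \<notin> UNIV \<longrightarrow> x $ i = 0)"
    have q: "qform N x = qform M x + of_real eps * of_real ((norm x)^2)"
      unfolding N_def qform_add qform_mat ..
    have "Im (qform M x) = 0 \<and> Re (qform M x) \<ge> 0"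
      using M(2) unfolding pos_semidef_def psd_on_def by blast
    moreover have "eps * (norm x)^2 > 0" using h epos by simp
    ultimately show "Im (qform N x) = 0" and "Re (qform N x) > 0" using q by simp_all
  qed
  ultimately show ?thesis by blast
qed

theorem theorem5p5:
  fixes E :: "('n::finite \<times> 'n) set" and A B :: "complex^'n^'n"
  assumes "is_graph E" and "completable E"
    and "partial_pd E B" and "partial_pd E (A - B)"
  shows "pd_completions E (A - B) =
    {M - N | M N. M \<in> pd_completions E A \<and> N \<in> pd_completions E B} \<inter> {M. pos_def M}"
proof
  obtain N where N: "is_completion E B N" "pos_def N"
    using pd_completion_exists[OF assms(2,3)] by blast
  show "pd_completions E (A - B) \<subseteq>
    {M - N | M N. M \<in> pd_completions E A \<and> N \<in> pd_completions E B} \<inter> {M. pos_def M}"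
  proof
    fix X assume X: "X \<in> pd_completions E (A - B)"
    have "is_completion E A (X + N)" unfolding is_completion_def
    proof (intro ballI, clarify)
      fix i j assume ij: "(i, j) \<in> E"
      have "X$i$j = A$i$j - B$i$j" "N$i$j = B$i$j"
        using X N(1) ij unfolding pd_completions_def is_completion_def by auto
      then show "(X + N)$i$j = A$i$j" by simp
    qed
    then have "X + N \<in> pd_completions E A"
      using X N unfolding pd_completions_def by (auto intro: pos_def_add)
    moreover have "N \<in> pd_completions E B" using N unfolding pd_completions_def by simp
    moreover have "X = (X + N) - N" by simp
    ultimately show "X \<in> {M - N | M N. M \<in> pd_completions E A \<and> N \<in> pd_completions E B} \<inter> {M. pos_def M}"
      using X unfolding pd_completions_def by blast
  qed
  show "{M - N | M N. M \<in> pd_completions E A \<and> N \<in> pd_completions E B} \<inter> {M. pos_def M}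
     \<subseteq> pd_completions E (A - B)"
  proof
    fix X assume "X \<in> {M - N | M N. M \<in> pd_completions E A \<and> N \<in> pd_completions E B} \<inter> {M. pos_def M}"
    then obtain M N where X: "X = M - N" "pos_def X" "is_completion E A M" "is_completion E B N"
      unfolding pd_completions_def by blast
    have "is_completion E (A - B) X" unfolding is_completion_def
    proof (intro ballI, clarify)
      fix i j assume ij: "(i, j) \<in> E"
      have "M$i$j = A$i$j" "N$i$j = B$i$j"
        using X ij unfolding is_completion_def by auto
      then show "X$i$j = (A - B)$i$j" using X(1) by simp
    qed
    then show "X \<in> pd_completions E (A - B)" using X(2) unfolding pd_completions_def by simp
  qed
qed

end
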